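(* Let $f: (\mathbb{R}^{+})^n \to (\mathbb{R}^{+})^n$ be homogeneous and monotone. Then $f$ has an eigenvector in $(\mathbb{R}^{+})^n$ if and only if some orbit $\{f^k(x) : k \in \mathbb{N}\}$ (with $x \in (\mathbb{R}^{+})^n$) is bounded in the Hilbert projective metric; moreover in that case all orbits of $f$ are bounded in the Hilbert projective metric.
   Context: Homogeneous: $f(\lambda x) = \lambda f(x)$ for all $\lambda > 0$; monotone: $x \le y$ componentwise implies $f(x) \le f(y)$. An eigenvector is $x \in (\mathbb{R}^{+})^n$ with $f(x) = \lambda x$ for some $\lambda > 0$. The Hilbert projective metric on $(\mathbb{R}^{+})^n$ is $d_H(y,z) = \max_i \log(y_i/z_i) - \min_i \log(y_i/z_i)$; a set $A$ is bounded in it if $\sup_{y,z \in A} d_H(y,z) < \infty$. *)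

theory Defs
  imports "HOL-Analysis.Analysis"
begin

definition pos_cone :: "(real^'n) set" where
  "pos_cone = {x. \<forall>i. x $ i > 0}"

definition homogeneous_on_cone :: "(real^'n \<Rightarrow> real^'n) \<Rightarrow> bool" where
  "homogeneous_on_cone f \<longleftrightarrow>
     (\<forall>x\<in>pos_cone. \<forall>l::real. l > 0 \<longrightarrow> f (l *\<^sub>R x) = l *\<^sub>R f x)"

definition monotone_on_cone :: "(real^'n \<Rightarrow> real^'n) \<Rightarrow> bool" where
  "monotone_on_cone f \<longleftrightarrow>
     (\<forall>x\<in>pos_cone. \<forall>y\<in>pos_cone. (\<forall>i. x $ i \<le> y $ i) \<longrightarrow> (\<forall>i. f x $ i \<le> f y $ i))"

definition is_eigenvector :: "(real^'n \<Rightarrow> real^'n) \<Rightarrow> real^'n \<Rightarrow> bool" where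
  "is_eigenvector f x \<longleftrightarrow> x \<in> pos_cone \<and> (\<exists>l::real. l > 0 \<and> f x = l *\<^sub>R x)"

definition hilbert_dist :: "real^'n \<Rightarrow> real^'n \<Rightarrow> real" where
  "hilbert_dist y z = (MAX i. ln (y $ i / z $ i)) - (MIN i. ln (y $ i / z $ i))"

definition hilbert_bounded :: "(real^'n) set \<Rightarrow> bool" where
  "hilbert_bounded A \<longleftrightarrow> bdd_above {hilbert_dist y z | y z. y \<in> A \<and> z \<in> A}"

end

theory Submission
  imports Defs
begin

definition hn :: "real^'n \<Rightarrow> real" where
  "hn v = (MAX i. v $ i) - (MIN i. v $ i)"

lemma mx_ge: "(g::'n::finite \<Rightarrow> real) i \<le> (MAX j. g j)"
  by (simp add: Max_ge)
lemma mn_le: "(MIN j. g j) \<le> (g::'n::finite \<Rightarrow> real) i"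
  by (simp add: Min_le)
lemma mx_at: "\<exists>i. (MAX j. (g::'n::finite \<Rightarrow> real) j) = g i"
proof -
  have "(MAX j. g j) \<in> range g" by (rule Max_in) auto
  then show ?thesis by (metis rangeE)
qed
lemma mn_at: "\<exists>i. (MIN j. (g::'n::finite \<Rightarrow> real) j) = g i"
proof -
  have "(MIN j. g j) \<in> range g" by (rule Min_in) auto
  then show ?thesis by (metis rangeE)
qed

lemma hn_ge: "v $ i - v $ j \<le> hn v"
  unfolding hn_def using mx_ge[of "\<lambda>i. v $ i" i] mn_le[of "\<lambda>i. v $ i" j] by linarith

lemma hn_le: assumes "\<And>i j. v $ i - v $ j \<le> c" shows "hn v \<le> c"
proof -
  obtain i where i: "(MAX j. v $ j) = v $ i" using mx_at by blast
  obtain j where j: "(MIN k. v $ k) = v $ j" using mn_at by blast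
  show ?thesis unfolding hn_def i j using assms by simp
qed

lemma hn_nonneg: "0 \<le> hn v"
  using hn_ge[of v i i] by simp

lemma hn_tri: "hn (a + b) \<le> hn a + hn b"
proof (rule hn_le)
  fix i j
  show "(a + b) $ i - (a + b) $ j \<le> hn a + hn b" using hn_ge[of a i j] hn_ge[of b i j] by simp
qed

lemma hn_const: "hn (a + vec c) = hn a"
proof (rule antisym)
  show "hn (a + vec c) \<le> hn a" by (rule hn_le) (use hn_ge[of a] in auto)
  show "hn a \<le> hn (a + vec c)" by (rule hn_le) (use hn_ge[of "a + vec c"] in auto)
qed

lemma hn_vec: "hn (vec c) = 0"
  using hn_const[of 0 c] by (simp add: hn_def)

lemma hn_sym: "hn (a - b) = hn (b - a)"
proof (rule antisym)
  show "hn (a - b) \<le> hn (b - a)"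
  proof (rule hn_le)
    fix i j show "(a - b) $ i - (a - b) $ j \<le> hn (b - a)" using hn_ge[of "b - a" j i] by simp
  qed
  show "hn (b - a) \<le> hn (a - b)"
  proof (rule hn_le)
    fix i j show "(b - a) $ i - (b - a) $ j \<le> hn (a - b)" using hn_ge[of "a - b" j i] by simp
  qed
qed

lemma hn_convex:
  assumes "0 \<le> u" "0 \<le> w"
  shows "hn (u *\<^sub>R a + w *\<^sub>R b) \<le> u * hn a + w * hn b"
proof (rule hn_le)
  fix i j
  have "u * (a $ i - a $ j) \<le> u * hn a" using assms hn_ge[of a i j] by (simp add: mult_left_mono)
  moreover have "w * (b $ i - b $ j) \<le> w * hn b" using assms hn_ge[of b i j] by (simp add: mult_left_mono)
  ultimately show "(u *\<^sub>R a + w *\<^sub>R b) $ i - (u *\<^sub>R a + w *\<^sub>R b) $ j \<le> u * hn a + w * hn b"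
    by (simp add: algebra_simps)
qed

lemma hn_comp: "\<bar>v $ i - v $ j\<bar> \<le> hn v"
  using hn_ge[of v i j] hn_ge[of v j i] by linarith

definition topical :: "(real^'n \<Rightarrow> real^'n) \<Rightarrow> bool" where
  "topical F \<longleftrightarrow> (\<forall>y z i. (MIN j. (y - z) $ j) \<le> (F y - F z) $ i \<and> (F y - F z) $ i \<le> (MAX j. (y - z) $ j))"

lemma top_nonexp: assumes "topical F" shows "hn (F y - F z) \<le> hn (y - z)"
proof (rule hn_le)
  fix i j
  have "(F y - F z) $ i \<le> (MAX j. (y - z) $ j)" "(MIN j. (y - z) $ j) \<le> (F y - F z) $ j"
    using assms unfolding topical_def by blast+
  then show "(F y - F z) $ i - (F y - F z) $ j \<le> hn (y - z)" unfolding hn_def by linarith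
qed

lemma mx_const: "(MAX j::'n::finite. (c::real)) = c"
proof -
  have "range (\<lambda>j::'n. c) = {c}" by auto
  then show ?thesis by simp
qed
lemma mn_const: "(MIN j::'n::finite. (c::real)) = c"
proof -
  have "range (\<lambda>j::'n. c) = {c}" by auto
  then show ?thesis by simp
qed

lemma top_shift: assumes "topical F" shows "F (y + vec c) = F y + vec c"
proof -
  have d: "(y + vec c - y) $ j = c" for j by simp
  have "(MIN j. (y + vec c - y) $ j) \<le> (F (y + vec c) - F y) $ i \<and> (F (y + vec c) - F y) $ i \<le> (MAX j. (y + vec c - y) $ j)" for i
    using assms unfolding topical_def by blast
  then have "c \<le> (F (y + vec c) - F y) $ i \<and> (F (y + vec c) - F y) $ i \<le> c" for i
    unfolding d mx_const mn_const .
  then have "(F (y + vec c) - F y) $ i = c" for i by (meson order_antisym)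
  then show ?thesis by (simp add: vec_eq_iff algebra_simps)
qed

lemma top_iter_nonexp: assumes "topical F" shows "hn ((F^^k) y - (F^^k) z) \<le> hn (y - z)"
  by (induction k) (auto intro: order_trans[OF top_nonexp[OF assms]])

lemma top_comp_bound: assumes "topical F" shows "\<bar>(F y - F z) $ i\<bar> \<le> norm (y - z)"
proof -
  obtain a where a: "(MAX j. (y - z) $ j) = (y - z) $ a" using mx_at by blast
  obtain b where b: "(MIN j. (y - z) $ j) = (y - z) $ b" using mn_at by blast
  have "(F y - F z) $ i \<le> (y - z) $ a" "(y - z) $ b \<le> (F y - F z) $ i"
    using assms unfolding topical_def a[symmetric] b[symmetric] by blast+
  moreover have "\<bar>(y - z) $ a\<bar> \<le> norm (y - z)" "\<bar>(y - z) $ b\<bar> \<le> norm (y - z)"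
    by (rule component_le_norm_cart)+
  ultimately show ?thesis by linarith
qed

lemma top_cont_comp: assumes "topical F" shows "continuous_on UNIV (\<lambda>y. F y $ i)"
  unfolding continuous_on_iff
proof (intro ballI allI impI)
  fix x e assume "(e::real) > 0"
  show "\<exists>d>0. \<forall>x'\<in>UNIV. dist x' x < d \<longrightarrow> dist (F x' $ i) (F x $ i) < e"
  proof (intro exI[of _ e] conjI ballI impI)
    fix x' assume "dist x' x < e"
    then show "dist (F x' $ i) (F x $ i) < e"
      using top_comp_bound[OF assms, of x' x i] by (simp add: dist_norm dist_real_def)
  qed fact
qed

lemma top_cont: assumes "topical F" shows "continuous_on UNIV F"
proof -
  have "continuous_on UNIV (\<lambda>y. \<chi> i. F y $ i)"
    by (intro continuous_on_vec_lambda top_cont_comp[OF assms])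
  then show ?thesis by simp
qed

lemma hn_comp_norm:
  fixes y :: "real^'n"
  assumes "y $ i0 = 0"
  shows "norm y \<le> real CARD('n) * hn y"
proof -
  have "\<bar>y $ i\<bar> \<le> hn y" for i using hn_comp[of y i i0] assms by simp
  then have "(\<Sum>i\<in>UNIV. \<bar>y $ i\<bar>) \<le> (\<Sum>i\<in>(UNIV::'n set). hn y)" by (intro sum_mono) auto
  then show ?thesis using norm_le_l1_cart[of y] by simp
qed

lemma top_fixed:
  fixes F :: "real^'n \<Rightarrow> real^'n"
  assumes top: "topical F" and bd: "\<And>k m. hn ((F^^k) x - (F^^m) x) \<le> B"
  shows "\<exists>y c. F y = y + vec c"
proof -
  define i0 :: 'n where "i0 = undefined"
  define G where "G y = F y - vec (F y $ i0)" for y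
  have Giter: "\<exists>c. (G^^k) y = (F^^k) y + vec c" for k y
  proof (induction k)
    case 0 show ?case by (rule exI[of _ 0]) simp
  next
    case (Suc k)
    then obtain c where c: "(G^^k) y = (F^^k) y + vec c" by blast
    have "(G^^Suc k) y = F ((F^^k) y + vec c) - vec (F ((F^^k) y + vec c) $ i0)"
      by (simp add: c G_def)
    also have "\<dots> = (F^^Suc k) y + vec (c - F ((F^^k) y + vec c) $ i0)"
      using top_shift[OF top] by (simp add: vec_eq_iff)
    finally show ?case by blast
  qed
  have Gbd: "hn ((G^^k) x - (G^^m) x) \<le> B" for k m
  proof -
    obtain c where c: "(G^^k) x = (F^^k) x + vec c" using Giter by blast
    obtain d where d: "(G^^m) x = (F^^m) x + vec d" using Giter by blast
    have "(G^^k) x - (G^^m) x = ((F^^k) x - (F^^m) x) + vec (c - d)"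
      by (simp add: c d vec_eq_iff)
    then show ?thesis using bd[of k m] by (simp only: hn_const)
  qed
  have Gne: "hn (G y - G z) \<le> hn (y - z)" for y z
  proof -
    have "G y - G z = (F y - F z) + vec (F z $ i0 - F y $ i0)" by (simp add: G_def vec_eq_iff)
    then show ?thesis using top_nonexp[OF top, of y z] by (simp only: hn_const)
  qed
  have Gcont: "continuous_on UNIV G"
  proof -
    have "continuous_on UNIV (\<lambda>y. \<chi> i. F y $ i - F y $ i0)"
      by (intro continuous_on_vec_lambda continuous_on_diff top_cont_comp[OF top])
    moreover have "(\<lambda>y. \<chi> i. F y $ i - F y $ i0) = G" by (auto simp: G_def vec_eq_iff)
    ultimately show ?thesis by metis
  qed
  define D where "D = {y. y $ i0 = 0 \<and> (\<exists>m. \<forall>k\<ge>m. hn (y - (G^^k) x) \<le> B)}"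
  have GxD: "G x \<in> D"
  proof -
    have "hn (G x - (G^^k) x) \<le> B" for k using Gbd[of 1 k] by simp
    then show ?thesis unfolding D_def by (auto simp: G_def)
  qed
  have convD: "convex D"
    unfolding convex_def
  proof (intro ballI allI impI)
    fix a b u v assume a: "a \<in> D" and b: "b \<in> D" and uv: "(0::real) \<le> u" "0 \<le> v" "u + v = 1"
    obtain m1 where m1: "\<forall>k\<ge>m1. hn (a - (G^^k) x) \<le> B" using a by (auto simp: D_def)
    obtain m2 where m2: "\<forall>k\<ge>m2. hn (b - (G^^k) x) \<le> B" using b by (auto simp: D_def)
    have "hn (u *\<^sub>R a + v *\<^sub>R b - (G^^k) x) \<le> B" if "k \<ge> max m1 m2" for k
    proof -
      have e: "u *\<^sub>R a + v *\<^sub>R b - (G^^k) x = u *\<^sub>R (a - (G^^k) x) + v *\<^sub>R (b - (G^^k) x)"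
        using uv(3) by (simp add: algebra_simps flip: scaleR_add_left)
      have "hn (u *\<^sub>R (a - (G^^k) x) + v *\<^sub>R (b - (G^^k) x)) \<le> u * hn (a - (G^^k) x) + v * hn (b - (G^^k) x)"
        by (rule hn_convex) (use uv in auto)
      also have "\<dots> \<le> u * B + v * B"
        using m1 m2 that uv by (intro add_mono mult_left_mono) auto
      also have "\<dots> = (u + v) * B" by (simp add: distrib_right)
      also have "\<dots> = B" using uv(3) by simp
      finally show ?thesis using e by simp
    qed
    moreover have "(u *\<^sub>R a + v *\<^sub>R b) $ i0 = 0" using a b by (simp add: D_def)
    ultimately show "u *\<^sub>R a + v *\<^sub>R b \<in> D" unfolding D_def by blast
  qed
  have bddD: "bounded D"
    unfolding bounded_iff
  proof (intro exI ballI)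
    fix y assume y: "y \<in> D"
    then obtain m where m: "hn (y - (G^^m) x) \<le> B" and y0: "y $ i0 = 0" by (auto simp: D_def)
    have "hn y \<le> hn (y - (G^^m) x) + hn ((G^^m) x - (G^^0) x) + hn x"
      using hn_tri[of "y - (G^^m) x" "(G^^m) x - x"] hn_tri[of "y - x" x] by simp
    also have "\<dots> \<le> B + B + hn x" using m Gbd[of m 0] by simp
    finally have "hn y \<le> 2 * B + hn x" by simp
    then show "norm y \<le> real CARD('n) * (2 * B + hn x)"
      using hn_comp_norm[OF y0] by (meson order_trans mult_left_mono of_nat_0_le_iff)
  qed
  have GD: "G ` D \<subseteq> D"
  proof
    fix z assume "z \<in> G ` D"
    then obtain y where y: "y \<in> D" and z: "z = G y" by blast
    then obtain m where m: "\<forall>k\<ge>m. hn (y - (G^^k) x) \<le> B" by (auto simp: D_def)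
    have "hn (G y - (G^^k) x) \<le> B" if "k \<ge> Suc m" for k
    proof -
      obtain j where j: "k = Suc j" "j \<ge> m" using \<open>k \<ge> Suc m\<close> by (cases k) auto
      have "hn (G y - (G^^k) x) = hn (G y - G ((G^^j) x))" by (simp add: j)
      also have "\<dots> \<le> hn (y - (G^^j) x)" by (rule Gne)
      also have "\<dots> \<le> B" using m j by simp
      finally show ?thesis .
    qed
    moreover have "G y $ i0 = 0" by (simp add: G_def)
    ultimately show "z \<in> D" unfolding D_def z by blast
  qed
  define S where "S = closure D"
  have "compact S" unfolding S_def using bounded_closure[OF bddD] by (simp add: compact_eq_bounded_closed)
  moreover have "convex S" unfolding S_def using convD by (rule convex_closure)
  moreover have "S \<noteq> {}" unfolding S_def using GxD closure_subset by blast
  moreover have "continuous_on S G" using Gcont by (rule continuous_on_subset) simp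
  moreover have "G \<in> S \<rightarrow> S"
  proof -
    have "G ` closure D \<subseteq> closure D"
    proof (rule image_closure_subset)
      show "continuous_on (closure D) G" using Gcont by (rule continuous_on_subset) simp
      show "G ` D \<subseteq> closure D" using GD closure_subset by blast
    qed simp
    then show ?thesis unfolding S_def by blast
  qed
  ultimately obtain y where Gy: "G y = y" by (rule brouwer)
  have "F y = G y + vec (F y $ i0)" by (simp add: G_def)
  then have "F y = y + vec (F y $ i0)" by (simp only: Gy)
  then show ?thesis by blast
qed

lemma top_eig_bounded:
  assumes top: "topical F" and w: "F w = w + vec c"
  shows "hn ((F^^k) y - (F^^m) y) \<le> 2 * hn (y - w)"
proof -
  have it: "(F^^k) w = w + vec (real k * c)" for k
  proof (induction k)
    case 0 show ?case by (simp add: vec_eq_iff)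
  next
    case (Suc k)
    have "(F^^Suc k) w = F (w + vec (real k * c))" by (simp add: Suc)
    also have "\<dots> = F w + vec (real k * c)" by (rule top_shift[OF top])
    also have "\<dots> = w + vec (real (Suc k) * c)" by (simp add: w vec_eq_iff algebra_simps)
    finally show ?case .
  qed
  have e: "(F^^k) y - (F^^m) y = (((F^^k) y - (F^^k) w) + ((F^^m) w - (F^^m) y)) + vec (real k * c - real m * c)"
    by (simp add: it vec_eq_iff algebra_simps)
  have "hn ((F^^k) y - (F^^m) y) = hn (((F^^k) y - (F^^k) w) + ((F^^m) w - (F^^m) y))"
    by (simp only: e hn_const)
  also have "\<dots> \<le> hn ((F^^k) y - (F^^k) w) + hn ((F^^m) w - (F^^m) y)" by (rule hn_tri)
  also have "\<dots> \<le> hn (y - w) + hn (w - y)"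
    by (intro add_mono top_iter_nonexp[OF top])
  also have "\<dots> = 2 * hn (y - w)" using hn_sym[of w y] by simp
  finally show ?thesis .
qed

definition Lg :: "real^'n \<Rightarrow> real^'n" where "Lg x = (\<chi> i. ln (x $ i))"
definition Xp :: "real^'n \<Rightarrow> real^'n" where "Xp y = (\<chi> i. exp (y $ i))"

lemma Ex_pos: "Xp y \<in> pos_cone" by (simp add: Xp_def pos_cone_def)
lemma Ex_Lg: "x \<in> pos_cone \<Longrightarrow> Xp (Lg x) = x" by (simp add: Xp_def Lg_def pos_cone_def vec_eq_iff)
lemma Lg_Ex: "Lg (Xp y) = y" by (simp add: Xp_def Lg_def vec_eq_iff)

lemma hd_Ex: "hilbert_dist (Xp a) (Xp b) = hn (a - b)"
  unfolding hilbert_dist_def hn_def Xp_def by (simp add: exp_diff[symmetric])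

lemma ln_bound:
  fixes f :: "real^'n \<Rightarrow> real^'n"
  assumes maps: "\<forall>x\<in>pos_cone. f x \<in> pos_cone"
    and hom: "homogeneous_on_cone f" and mon: "monotone_on_cone f"
    and a: "a \<in> pos_cone" and b: "b \<in> pos_cone" and t: "t > 0"
  shows "(\<forall>j. a $ j \<le> t * b $ j) \<Longrightarrow> ln (f a $ i) \<le> ln t + ln (f b $ i)"
    and "(\<forall>j. t * b $ j \<le> a $ j) \<Longrightarrow> ln t + ln (f b $ i) \<le> ln (f a $ i)"
proof -
  have tb: "t *\<^sub>R b \<in> pos_cone" using b t by (simp add: pos_cone_def)
  have fa: "f a $ i > 0" and fb: "f b $ i > 0" using maps a b by (auto simp: pos_cone_def)
  have h: "f (t *\<^sub>R b) $ i = t * f b $ i" using hom b t by (simp add: homogeneous_on_cone_def)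
  have lnt: "ln t + ln (f b $ i) = ln (t * f b $ i)" using t fb by (simp add: ln_mult)
  show "ln (f a $ i) \<le> ln t + ln (f b $ i)" if "\<forall>j. a $ j \<le> t * b $ j"
  proof -
    have "f a $ i \<le> f (t *\<^sub>R b) $ i" using mon a tb that unfolding monotone_on_cone_def by auto
    then show ?thesis unfolding lnt using h fa by simp
  qed
  show "ln t + ln (f b $ i) \<le> ln (f a $ i)" if "\<forall>j. t * b $ j \<le> a $ j"
  proof -
    have "f (t *\<^sub>R b) $ i \<le> f a $ i" using mon a tb that unfolding monotone_on_cone_def by auto
    then show ?thesis unfolding lnt using h fa fb t by simp
  qed
qed

lemma F_topical:
  fixes f :: "real^'n \<Rightarrow> real^'n"
  assumes maps: "\<forall>x\<in>pos_cone. f x \<in> pos_cone"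
    and hom: "homogeneous_on_cone f" and mon: "monotone_on_cone f"
  shows "topical (\<lambda>y. Lg (f (Xp y)))"
  unfolding topical_def
proof (intro allI conjI)
  fix y z :: "real^'n" and i
  define M where "M = (MAX j. (y - z) $ j)"
  define m where "m = (MIN j. (y - z) $ j)"
  have d: "(Lg (f (Xp y)) - Lg (f (Xp z))) $ i = ln (f (Xp y) $ i) - ln (f (Xp z) $ i)"
    by (simp add: Lg_def)
  have "\<forall>j. Xp y $ j \<le> exp M * Xp z $ j"
  proof
    fix j have "y $ j - z $ j \<le> M" unfolding M_def using mx_ge[of "\<lambda>j. (y - z) $ j" j] by simp
    then show "Xp y $ j \<le> exp M * Xp z $ j" by (simp add: Xp_def exp_add[symmetric])
  qed
  from ln_bound(1)[OF maps hom mon Ex_pos Ex_pos exp_gt_zero this, of i]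
  show "(Lg (f (Xp y)) - Lg (f (Xp z))) $ i \<le> (MAX j. (y - z) $ j)"
    unfolding d M_def[symmetric] by simp
  have "\<forall>j. exp m * Xp z $ j \<le> Xp y $ j"
  proof
    fix j have "m \<le> y $ j - z $ j" unfolding m_def using mn_le[of "\<lambda>j. (y - z) $ j" j] by simp
    then show "exp m * Xp z $ j \<le> Xp y $ j" by (simp add: Xp_def exp_add[symmetric])
  qed
  from ln_bound(2)[OF maps hom mon Ex_pos Ex_pos exp_gt_zero this, of i]
  show "(MIN j. (y - z) $ j) \<le> (Lg (f (Xp y)) - Lg (f (Xp z))) $ i"
    unfolding d m_def[symmetric] by simp
qed

lemma orbit_log:
  fixes f :: "real^'n \<Rightarrow> real^'n"
  assumes maps: "\<forall>x\<in>pos_cone. f x \<in> pos_cone" and x: "x \<in> pos_cone"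
  shows "(f^^k) x = Xp (((\<lambda>y. Lg (f (Xp y)))^^k) (Lg x))"
proof (induction k)
  case 0 show ?case using x by (simp add: Ex_Lg)
next
  case (Suc k)
  have "f z \<in> pos_cone" if "z \<in> pos_cone" for z using maps that by blast
  then have "f (Xp w) \<in> pos_cone" for w using Ex_pos by blast
  then show ?case using Suc by (simp add: Ex_Lg)
qed

lemma hb_iff:
  fixes f :: "real^'n \<Rightarrow> real^'n"
  assumes maps: "\<forall>x\<in>pos_cone. f x \<in> pos_cone" and x: "x \<in> pos_cone"
  shows "hilbert_bounded {(f ^^ k) x | k::nat. True} \<longleftrightarrow>
    (\<exists>B. \<forall>k m. hn ((((\<lambda>y. Lg (f (Xp y)))^^k) (Lg x)) - (((\<lambda>y. Lg (f (Xp y)))^^m) (Lg x))) \<le> B)"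
  (is "?L \<longleftrightarrow> (\<exists>B. \<forall>k m. hn ((?F^^k) ?w - (?F^^m) ?w) \<le> B)")
proof -
  have o: "(f^^k) x = Xp ((?F^^k) ?w)" for k using orbit_log[OF maps x] .
  have eq: "{hilbert_dist y z | y z. y \<in> {(f ^^ k) x | k::nat. True} \<and> z \<in> {(f ^^ k) x | k::nat. True}}
      = {hn ((?F^^k) ?w - (?F^^m) ?w) | k m. True}"
  proof (rule set_eqI, rule iffI)
    fix t assume "t \<in> {hilbert_dist y z | y z. y \<in> {(f ^^ k) x | k::nat. True} \<and> z \<in> {(f ^^ k) x | k::nat. True}}"
    then obtain k m where "t = hilbert_dist ((f^^k) x) ((f^^m) x)" by blast
    then have "t = hn ((?F^^k) ?w - (?F^^m) ?w)" by (simp only: o hd_Ex)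
    then show "t \<in> {hn ((?F^^k) ?w - (?F^^m) ?w) | k m. True}" by blast
  next
    fix t assume "t \<in> {hn ((?F^^k) ?w - (?F^^m) ?w) | k m. True}"
    then obtain k m where "t = hn ((?F^^k) ?w - (?F^^m) ?w)" by blast
    then have "t = hilbert_dist ((f^^k) x) ((f^^m) x)" by (simp only: o hd_Ex)
    then show "t \<in> {hilbert_dist y z | y z. y \<in> {(f ^^ k) x | k::nat. True} \<and> z \<in> {(f ^^ k) x | k::nat. True}}" by blast
  qed
  show ?thesis unfolding hilbert_bounded_def bdd_above_def eq by blast
qed

theorem theorem3:
  fixes f :: "real^'n \<Rightarrow> real^'n"
  assumes maps: "\<forall>x\<in>pos_cone. f x \<in> pos_cone"
    and hom: "homogeneous_on_cone f"
    and mon: "monotone_on_cone f"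
  shows "((\<exists>x. is_eigenvector f x) \<longleftrightarrow>
            (\<exists>x\<in>pos_cone. hilbert_bounded {(f ^^ k) x | k::nat. True}))
         \<and> ((\<exists>x. is_eigenvector f x) \<longrightarrow>
            (\<forall>x\<in>pos_cone. hilbert_bounded {(f ^^ k) x | k::nat. True}))"
proof -
  define F where "F = (\<lambda>y. Lg (f (Xp y)))"
  have top: "topical F" unfolding F_def by (rule F_topical[OF maps hom mon])
  have hb: "hilbert_bounded {(f ^^ k) x | k::nat. True} \<longleftrightarrow> (\<exists>B. \<forall>k m. hn ((F^^k) (Lg x) - (F^^m) (Lg x)) \<le> B)"
    if "x \<in> pos_cone" for x
    unfolding F_def by (rule hb_iff[OF maps that])
  have A: "\<forall>x\<in>pos_cone. hilbert_bounded {(f ^^ k) x | k::nat. True}" if "is_eigenvector f u" for u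
  proof
    fix x :: "real^'n" assume x: "x \<in> pos_cone"
    from that obtain l where u: "u \<in> pos_cone" and l: "l > 0" "f u = l *\<^sub>R u"
      unfolding is_eigenvector_def by blast
    have "F (Lg u) = Lg (f u)" by (simp add: F_def Ex_Lg u)
    also have "\<dots> = Lg u + vec (ln l)"
    proof -
      have "ln (l * u $ i) = ln l + ln (u $ i)" for i
        by (rule ln_mult_pos) (use u l(1) in \<open>auto simp: pos_cone_def\<close>)
      then show ?thesis by (simp add: Lg_def vec_eq_iff l(2))
    qed
    finally have "F (Lg u) = Lg u + vec (ln l)" .
    then have "hn ((F^^k) (Lg x) - (F^^m) (Lg x)) \<le> 2 * hn (Lg x - Lg u)" for k m
      by (rule top_eig_bounded[OF top])
    then show "hilbert_bounded {(f ^^ k) x | k::nat. True}" using hb[OF x] by blast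
  qed
  have B: "\<exists>u. is_eigenvector f u" if xh: "x \<in> pos_cone" "hilbert_bounded {(f ^^ k) x | k::nat. True}" for x
  proof -
    obtain B where "\<forall>k m. hn ((F^^k) (Lg x) - (F^^m) (Lg x)) \<le> B" using hb[OF xh(1)] xh(2) by blast
    then obtain y c where y: "F y = y + vec c" using top_fixed[OF top] by blast
    have "f (Xp y) \<in> pos_cone" using maps Ex_pos by blast
    then have "f (Xp y) = Xp (F y)" by (simp add: F_def Ex_Lg)
    also have "\<dots> = exp c *\<^sub>R Xp y" by (simp add: y Xp_def vec_eq_iff exp_add)
    finally have "is_eigenvector f (Xp y)" unfolding is_eigenvector_def using Ex_pos exp_gt_zero by blast
    then show ?thesis by blast
  qed
  show ?thesis
  proof (intro conjI iffI impI)
    assume "\<exists>x. is_eigenvector f x"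
    then obtain u where u: "is_eigenvector f u" by blast
    then have "u \<in> pos_cone" by (simp add: is_eigenvector_def)
    then show "\<exists>x\<in>pos_cone. hilbert_bounded {(f ^^ k) x | k::nat. True}" using A[OF u] by blast
  next
    assume "\<exists>x\<in>pos_cone. hilbert_bounded {(f ^^ k) x | k::nat. True}"
    then show "\<exists>x. is_eigenvector f x" using B by blast
  next
    assume "\<exists>x. is_eigenvector f x"
    then show "\<forall>x\<in>pos_cone. hilbert_bounded {(f ^^ k) x | k::nat. True}" using A by blast
  qed
qed

end
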